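(* Let $F\le \mathrm{SL}_2(\mathbb{Z})$ be a free group with free basis $s_1,\dots,s_d$, and let $S=\{s_1^{\pm1},\dots,s_d^{\pm1}\}$. Let $p$ be a prime such that the reduction map $\pi_p:\mathrm{SL}_2(\mathbb{Z})\to\mathrm{SL}_2(\mathbb{F}_p)$ is injective on $S$, and identify $S$ with $\pi_p(S)$. Let $\|\cdot\|$ be a norm on $M_2(\mathbb{R})$ satisfying $\|X\|\ge\|X\|_\infty$ for all $X\in M_2(\mathbb{R})$, let \[\eta=\sup_{g,h\in\mathrm{SL}_2(\mathbb{Z})}\frac{\|gh\|}{\|g\|\,\|h\|},\] assume $\eta<\infty$, and let $M=\max_{s\in S}\|s\|$. If $\mathfrak g$ is the girth of $\mathrm{Cay}(\mathrm{SL}_2(\mathbb{F}_p),S)$, then \[(\eta M)^{\lceil \mathfrak g/2\rceil}\ \ge\ \frac{\eta\, p}{2}.\]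
   Context: $\|X\|_\infty$ denotes the maximum of the absolute values of the entries of the matrix $X$. For a group $G$ and symmetric $T=T^{-1}\subseteq G$, $\mathrm{Cay}(G,T)$ is the graph on $G$ with edges $\{g,gt\}$, $g\in G$, $t\in T$; its girth is the smallest $k\ge1$ for which there exist $t_1,\dots,t_k\in T$ with $t_it_{i+1}\ne e$ for all $1\le i<k$ and $t_1\cdots t_k=e$. *)

theory Defs
  imports "HOL-Analysis.Analysis"
begin

definition SL2Z :: "(int^2^2) set" where
  "SL2Z = {X. det X = 1}"

definition sl2_inv :: "int^2^2 \<Rightarrow> int^2^2" where
  "sl2_inv A = (\<chi> i j.
      if i = 1 \<and> j = 1 then A$2$2
      else if i = 1 \<and> j = 2 then - A$1$2
      else if i = 2 \<and> j = 1 then - A$2$1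
      else A$1$1)"

text \<open>Words in the letters s_i^{+1} (True) and s_i^{-1} (False).\<close>
definition letter :: "(nat \<Rightarrow> int^2^2) \<Rightarrow> nat \<times> bool \<Rightarrow> int^2^2" where
  "letter s l = (if snd l then s (fst l) else sl2_inv (s (fst l)))"

definition word_prod :: "(nat \<Rightarrow> int^2^2) \<Rightarrow> (nat \<times> bool) list \<Rightarrow> int^2^2" where
  "word_prod s w = foldr (\<lambda>l A. letter s l ** A) w (mat 1)"

definition reduced_word :: "(nat \<times> bool) list \<Rightarrow> bool" where
  "reduced_word w = (\<forall>i. Suc i < length w \<longrightarrow>
       \<not> (fst (w ! i) = fst (w ! Suc i) \<and> snd (w ! i) \<noteq> snd (w ! Suc i)))"

text \<open>s_0,...,s_{d-1} in SL_2(Z) form a free basis of the subgroup they generate: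
  no nonempty reduced word in them evaluates to the identity.\<close>
definition free_basis :: "nat \<Rightarrow> (nat \<Rightarrow> int^2^2) \<Rightarrow> bool" where
  "free_basis d s = ((\<forall>i<d. s i \<in> SL2Z) \<and>
     (\<forall>w. w \<noteq> [] \<and> (\<forall>l\<in>set w. fst l < d) \<and> reduced_word w \<longrightarrow> word_prod s w \<noteq> mat 1))"

definition sym_gens :: "nat \<Rightarrow> (nat \<Rightarrow> int^2^2) \<Rightarrow> (int^2^2) set" where
  "sym_gens d s = {s i | i. i < d} \<union> {sl2_inv (s i) | i. i < d}"

text \<open>Reduction mod p: entries reduced into {0..p-1}; SL_2(F_p) is modelled by such
  representatives, multiplication being reduction of the integer product.\<close>
definition red_p :: "int \<Rightarrow> int^2^2 \<Rightarrow> int^2^2" where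
  "red_p p X = (\<chi> i j. X$i$j mod p)"

definition mat_list_prod :: "(int^2^2) list \<Rightarrow> int^2^2" where
  "mat_list_prod xs = foldr (**) xs (mat 1)"

text \<open>A non-backtracking closed walk of length k in Cay(SL_2(F_p), T): t_1..t_k in T,
  t_i t_{i+1} \<noteq> e, t_1 \<cdots> t_k = e (all computed in SL_2(F_p)).\<close>
definition cay_cycle :: "int \<Rightarrow> (int^2^2) set \<Rightarrow> nat \<Rightarrow> bool" where
  "cay_cycle p T k = (\<exists>t :: nat \<Rightarrow> int^2^2.
      (\<forall>i<k. t i \<in> T) \<and>
      (\<forall>i. Suc i < k \<longrightarrow> red_p p (t i ** t (Suc i)) \<noteq> mat 1) \<and>
      red_p p (mat_list_prod (map t [0..<k])) = mat 1)"

definition is_cay_girth :: "int \<Rightarrow> (int^2^2) set \<Rightarrow> nat \<Rightarrow> bool" where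
  "is_cay_girth p T g = (1 \<le> g \<and> cay_cycle p T g \<and> (\<forall>k. 1 \<le> k \<and> k < g \<longrightarrow> \<not> cay_cycle p T k))"

definition to_real_mat :: "int^2^2 \<Rightarrow> real^2^2" where
  "to_real_mat X = (\<chi> i j. real_of_int (X$i$j))"

text \<open>N is a norm on M_2(R) (given as a function, since the type carries a fixed norm).\<close>
definition is_norm :: "(real^2^2 \<Rightarrow> real) \<Rightarrow> bool" where
  "is_norm N = ((\<forall>x. N x = 0 \<longleftrightarrow> x = 0) \<and> (\<forall>c x. N (c *\<^sub>R x) = \<bar>c\<bar> * N x) \<and>
     (\<forall>x y. N (x + y) \<le> N x + N y))"

end

theory Submission imports Defs begin

lemma mat2_eq: "(X::'a^2^2) = Y \<longleftrightarrow> X$1$1 = Y$1$1 \<and> X$1$2 = Y$1$2 \<and> X$2$1 = Y$2$1 \<and> X$2$2 = Y$2$2"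
  by (auto simp: vec_eq_iff forall_2)

lemma mult2: "((X::'a::semiring_1^2^2) ** (Y::'a^2^2))$i$j = X$i$1 * Y$1$j + X$i$2 * Y$2$j"
  by (simp add: matrix_matrix_mult_def sum_2)

lemma mat1_2: "(mat 1 :: 'a::zero_neq_one^2^2)$1$1 = 1" "(mat 1 :: 'a::zero_neq_one^2^2)$2$2 = 1"
   "(mat 1 :: 'a::zero_neq_one^2^2)$1$2 = 0" "(mat 1 :: 'a::zero_neq_one^2^2)$2$1 = 0"
  by (auto simp: mat_def)

lemma inv_simps: "sl2_inv A $1$1 = A$2$2" "sl2_inv A $1$2 = - A$1$2" "sl2_inv A $2$1 = - A$2$1" "sl2_inv A $2$2 = A$1$1"
  by (auto simp: sl2_inv_def)

lemma SL2Z_det: "X \<in> SL2Z \<longleftrightarrow> X$1$1 * X$2$2 - X$1$2 * X$2$1 = 1"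
  by (simp add: SL2Z_def det_2)

lemma inv_right: "X \<in> SL2Z \<Longrightarrow> X ** sl2_inv X = mat 1"
  by (simp add: mat2_eq mult2 inv_simps mat1_2 SL2Z_det algebra_simps)
lemma inv_left: "X \<in> SL2Z \<Longrightarrow> sl2_inv X ** X = mat 1"
  by (simp add: mat2_eq mult2 inv_simps mat1_2 SL2Z_det algebra_simps)
lemma inv_inv: "sl2_inv (sl2_inv X) = X"
  by (simp add: mat2_eq inv_simps)
lemma inv_mult: "sl2_inv (X ** Y) = sl2_inv Y ** sl2_inv X"
  by (simp add: mat2_eq mult2 inv_simps algebra_simps)
lemma inv_one: "sl2_inv (mat 1) = mat 1"
  by (simp add: mat2_eq inv_simps mat1_2)
lemma SL2Z_mult: "X \<in> SL2Z \<Longrightarrow> Y \<in> SL2Z \<Longrightarrow> X ** Y \<in> SL2Z"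
  by (simp add: SL2Z_def det_mul)
lemma SL2Z_inv: "X \<in> SL2Z \<Longrightarrow> sl2_inv X \<in> SL2Z"
  by (simp add: SL2Z_det inv_simps algebra_simps)
lemma SL2Z_one: "mat 1 \<in> SL2Z"
  by (simp add: SL2Z_def)

lemma modh: "((a::int)*b+c*e) mod p = ((a mod p)*(b mod p) + (c mod p)*(e mod p)) mod p"
  by (metis mod_add_eq mod_mult_eq)
lemma red_mult: "red_p p (X ** Y) = red_p p (red_p p X ** red_p p Y)"
  by (simp add: red_p_def mat2_eq mult2 modh[symmetric])
lemma red_red: "red_p p (red_p p X) = red_p p X"
  by (simp add: red_p_def mat2_eq)
lemma red_one: "p > 1 \<Longrightarrow> red_p p (mat 1) = mat 1"
  by (simp add: red_p_def mat2_eq mat1_2)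


lemma prod_append: "mat_list_prod (xs @ ys) = mat_list_prod xs ** mat_list_prod ys"
  by (induction xs) (auto simp: mat_list_prod_def matrix_mul_assoc matrix_mul_lid)

lemma prod_SL: "set xs \<subseteq> SL2Z \<Longrightarrow> mat_list_prod xs \<in> SL2Z"
  by (induction xs) (auto simp: mat_list_prod_def SL2Z_one SL2Z_mult)

lemma prod_single: "mat_list_prod [x] = x"
  by (simp add: mat_list_prod_def matrix_mul_rid)

lemma prod_inv: "sl2_inv (mat_list_prod xs) = mat_list_prod (rev (map sl2_inv xs))"
proof (induction xs)
  case Nil then show ?case by (simp add: mat_list_prod_def inv_one)
next
  case (Cons a xs)
  have "sl2_inv (mat_list_prod (a # xs)) = sl2_inv (a ** mat_list_prod xs)" by (simp add: mat_list_prod_def)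
  also have "\<dots> = mat_list_prod (rev (map sl2_inv xs)) ** mat_list_prod [sl2_inv a]"
    by (simp add: inv_mult Cons prod_single)
  also have "\<dots> = mat_list_prod (rev (map sl2_inv (a#xs)))" by (simp add: prod_append)
  finally show ?case .
qed

lemma prod_red: "(\<forall>x\<in>set xs. red_p p (f x) = red_p p (h x)) \<Longrightarrow>
   red_p p (mat_list_prod (map f xs)) = red_p p (mat_list_prod (map h xs))"
proof (induction xs)
  case Nil then show ?case by simp
next
  case (Cons a xs)
  have "red_p p (mat_list_prod (map f (a#xs))) = red_p p (f a ** mat_list_prod (map f xs))"
    by (simp add: mat_list_prod_def)
  also have "\<dots> = red_p p (red_p p (f a) ** red_p p (mat_list_prod (map f xs)))" by (rule red_mult)
  also have "\<dots> = red_p p (red_p p (h a) ** red_p p (mat_list_prod (map h xs)))" using Cons by simp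
  also have "\<dots> = red_p p (mat_list_prod (map h (a#xs)))"
    by (simp add: mat_list_prod_def red_mult[symmetric])
  finally show ?case .
qed

lemma word_prod_map: "word_prod s (map lw xs) = mat_list_prod (map (\<lambda>i. letter s (lw i)) xs)"
  by (induction xs) (auto simp: word_prod_def mat_list_prod_def)

lemma prod_bound:
  fixes N :: "real^2^2 \<Rightarrow> real"
  assumes eta: "\<And>G H. G \<in> SL2Z \<Longrightarrow> H \<in> SL2Z \<Longrightarrow> N (to_real_mat (G ** H)) \<le> \<eta> * N (to_real_mat G) * N (to_real_mat H)"
   and "\<eta> \<ge> 0" and nn: "\<And>X. N X \<ge> 0"
   and "set xs \<subseteq> SL2Z" and "\<forall>x\<in>set xs. N (to_real_mat x) \<le> M" and "xs \<noteq> []"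
  shows "\<eta> * N (to_real_mat (mat_list_prod xs)) \<le> (\<eta>*M)^length xs"
using assms(4-6) proof (induction xs)
  case Nil then show ?case by simp
next
  case (Cons x xs)
  show ?case
  proof (cases "xs = []")
    case True
    have "\<eta> * N (to_real_mat x) \<le> \<eta> * M" using Cons.prems \<open>\<eta>\<ge>0\<close> by (auto intro: mult_left_mono)
    then show ?thesis using True by (simp add: prod_single)
  next
    case False
    have IH: "\<eta> * N (to_real_mat (mat_list_prod xs)) \<le> (\<eta>*M)^length xs" using Cons False by auto
    have x: "x \<in> SL2Z" "N (to_real_mat x) \<le> M" using Cons.prems by auto
    have P: "mat_list_prod xs \<in> SL2Z" using Cons.prems prod_SL by auto
    have "\<eta> * N (to_real_mat (mat_list_prod (x#xs))) = \<eta> * N (to_real_mat (x ** mat_list_prod xs))"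
      by (simp add: mat_list_prod_def)
    also have "\<dots> \<le> \<eta> * (\<eta> * N (to_real_mat x) * N (to_real_mat (mat_list_prod xs)))"
      using eta[OF x(1) P] \<open>\<eta>\<ge>0\<close> by (simp add: mult_left_mono)
    also have "\<dots> = (\<eta> * N (to_real_mat x)) * (\<eta> * N (to_real_mat (mat_list_prod xs)))" by simp
    also have "\<dots> \<le> (\<eta>*M) * (\<eta>*M)^length xs"
      apply (rule mult_mono)
      using x IH \<open>\<eta>\<ge>0\<close> nn[of "to_real_mat x"] nn[of "to_real_mat (mat_list_prod xs)"] apply (auto intro: mult_left_mono)
      done
    finally show ?thesis by simp
  qed
qed

lemma box_finite: "finite {X::int^2^2. \<forall>i j. \<bar>X$i$j\<bar> \<le> K}"
proof -
  let ?f = "\<lambda>X::int^2^2. (X$1$1, X$1$2, X$2$1, X$2$2)"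
  have "inj ?f" by (auto simp: inj_def mat2_eq)
  then have "finite (?f -` ({-K..K} \<times> {-K..K} \<times> {-K..K} \<times> {-K..K}))"
    by (intro finite_vimageI) auto
  moreover have "{X::int^2^2. \<forall>i j. \<bar>X$i$j\<bar> \<le> K} \<subseteq> ?f -` ({-K..K} \<times> {-K..K} \<times> {-K..K} \<times> {-K..K})"
  proof
    fix X :: "int^2^2" assume "X \<in> {X::int^2^2. \<forall>i j. \<bar>X$i$j\<bar> \<le> K}"
    then have "\<bar>X$1$1\<bar> \<le> K" "\<bar>X$1$2\<bar> \<le> K" "\<bar>X$2$1\<bar> \<le> K" "\<bar>X$2$2\<bar> \<le> K" by auto
    then show "X \<in> ?f -` ({-K..K} \<times> {-K..K} \<times> {-K..K} \<times> {-K..K})" by auto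
  qed
  ultimately show ?thesis by (rule finite_subset[rotated])
qed


lemma etaM_ge1:
  fixes N :: "real^2^2 \<Rightarrow> real"
  assumes fb: "free_basis d s" and d: "0 < d"
   and eta: "\<And>G H. G \<in> SL2Z \<Longrightarrow> H \<in> SL2Z \<Longrightarrow> N (to_real_mat (G ** H)) \<le> \<eta> * N (to_real_mat G) * N (to_real_mat H)"
   and etapos: "\<eta> > 0" and nn: "\<And>X. N X \<ge> 0"
   and ent: "\<And>X i j. \<bar>real_of_int (X$i$j)\<bar> \<le> N (to_real_mat X)"
   and M: "N (to_real_mat (s 0)) \<le> M"
  shows "\<eta> * M \<ge> 1"
proof (rule ccontr)
  assume "\<not> \<eta> * M \<ge> 1"
  hence lt: "\<eta> * M < 1" by simp
  have M0: "\<eta>*M \<ge> 0" using M nn[of "to_real_mat (s 0)"] etapos by simp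
  define P where "P n = mat_list_prod (replicate n (s 0))" for n
  have s0: "s 0 \<in> SL2Z" using fb d by (simp add: free_basis_def)
  have PSL: "P n \<in> SL2Z" for n using s0 by (auto simp: P_def intro!: prod_SL)
  have Padd: "P (a+b) = P a ** P b" for a b by (simp add: P_def replicate_add prod_append)
  have Pne: "P n \<noteq> mat 1" if "n \<ge> 1" for n
  proof -
    have "replicate n (0::nat,True) \<noteq> [] \<and> (\<forall>l\<in>set (replicate n (0::nat,True)). fst l < d) \<and> reduced_word (replicate n (0,True))"
      using d that by (auto simp: reduced_word_def)
    then have "word_prod s (replicate n (0,True)) \<noteq> mat 1"
      using fb unfolding free_basis_def by blast
    moreover have "word_prod s (replicate n (0,True)) = P n"
      unfolding P_def word_prod_def mat_list_prod_def by (induction n) (auto simp: letter_def)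
    ultimately show ?thesis by simp
  qed
  have injP: "inj P"
  proof (rule injI)
    fix a b assume eq: "P a = P b"
    show "a = b"
    proof (rule ccontr)
      assume "a \<noteq> b"
      then obtain x y where xy: "x < y" "P x = P y" using eq by (metis linorder_neq_iff)
      then have "P y = P x ** P (y - x)" using Padd[of x "y-x"] by simp
      then have "sl2_inv (P x) ** P x = sl2_inv (P x) ** (P x ** P (y-x))" using xy by simp
      then have "P (y-x) = mat 1" using inv_left[OF PSL[of x]] by (simp add: matrix_mul_assoc matrix_mul_lid)
      moreover have "y - x \<ge> 1" using xy by simp
      ultimately show False using Pne by auto
    qed
  qed
  define K where "K = \<lceil>max 1 (1/\<eta>)\<rceil>"
  have K1: "real_of_int K \<ge> max 1 (1/\<eta>)" unfolding K_def by (rule le_of_int_ceiling)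
  have "range P \<subseteq> {X::int^2^2. \<forall>i j. \<bar>X$i$j\<bar> \<le> K}"
  proof clarify
    fix n i j
    show "\<bar>P n $ i $ j\<bar> \<le> K"
    proof (cases "n = 0")
      case True
      have "\<bar>P n $ i $ j\<bar> \<le> 1" using True by (simp add: P_def mat_list_prod_def mat_def)
      moreover have "1 \<le> K" using K1 by simp
      ultimately show ?thesis by simp
    next
      case False
      have "\<eta> * N (to_real_mat (P n)) \<le> (\<eta>*M)^length (replicate n (s 0))"
        unfolding P_def
        by (rule prod_bound[where N=N and \<eta>=\<eta> and M=M, OF eta]) (use etapos nn s0 M False in auto)
      also have "\<dots> \<le> 1" using lt M0 by (simp add: power_le_one)
      finally have "N (to_real_mat (P n)) \<le> 1/\<eta>" using etapos by (simp add: field_simps)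
      then have "\<bar>real_of_int (P n $i$j)\<bar> \<le> real_of_int K" using ent[of "P n" i j] K1 by linarith
      then show ?thesis by linarith
    qed
  qed
  then have "finite (range P)" using box_finite finite_subset by blast
  then show False using injP finite_imageD infinite_UNIV_nat by blast
qed


theorem lemma2p4:
  fixes d :: nat and s :: "nat \<Rightarrow> int^2^2" and p :: int and N :: "real^2^2 \<Rightarrow> real"
    and g :: nat
  assumes "free_basis d s"
    and "prime p"
    and "inj_on (red_p p) (sym_gens d s)"
    and "is_norm N"
    and "\<forall>X i j. N X \<ge> \<bar>X$i$j\<bar>"
    and "bdd_above {N (to_real_mat (G ** H)) / (N (to_real_mat G) * N (to_real_mat H)) | G H.
                     G \<in> SL2Z \<and> H \<in> SL2Z}"
    and "is_cay_girth p (red_p p ` sym_gens d s) g"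
  shows "(let \<eta> = Sup {N (to_real_mat (G ** H)) / (N (to_real_mat G) * N (to_real_mat H)) | G H.
                         G \<in> SL2Z \<and> H \<in> SL2Z};
              M = Max (N ` to_real_mat ` sym_gens d s)
          in (\<eta> * M) ^ nat \<lceil>real g / 2\<rceil> \<ge> \<eta> * real_of_int p / 2)"
proof -
  define S where "S = sym_gens d s"
  define R where "R = {N (to_real_mat (G ** H)) / (N (to_real_mat G) * N (to_real_mat H)) | G H. G \<in> SL2Z \<and> H \<in> SL2Z}"
  define \<eta> where "\<eta> = Sup R"
  define M where "M = Max (N ` to_real_mat ` S)"
  define k where "k = nat \<lceil>real g / 2\<rceil>"
  have ent: "\<bar>real_of_int (X$i$j)\<bar> \<le> N (to_real_mat X)" for X i j
  proof -
    have "\<bar>to_real_mat X $ i $ j\<bar> \<le> N (to_real_mat X)" using assms(5) by blast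
    then show ?thesis by (simp add: to_real_mat_def)
  qed
  have nn: "N X \<ge> 0" for X using assms(5) by (meson abs_ge_zero order_trans)
  have N1: "N (to_real_mat G) \<ge> 1" if "G \<in> SL2Z" for G
  proof -
    have "\<exists>i j. G$i$j \<noteq> 0"
    proof (rule ccontr)
      assume "\<not> (\<exists>i j. G$i$j \<noteq> 0)"
      then show False using that by (simp add: SL2Z_det)
    qed
    then obtain i j where ij: "G$i$j \<noteq> 0" by blast
    then have "1 \<le> \<bar>G$i$j\<bar>" by arith
    then have "1 \<le> \<bar>real_of_int (G$i$j)\<bar>" by (metis of_int_1_le_iff of_int_abs)
    then show ?thesis using ent[of G i j] by linarith
  qed
  have p2: "p \<ge> 2" using assms(2) by (simp add: prime_ge_2_int)
  have S_SL: "S \<subseteq> SL2Z" using assms(1) by (auto simp: S_def sym_gens_def free_basis_def SL2Z_inv)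
  have S_inv: "sl2_inv x \<in> S" if "x \<in> S" for x using that by (auto simp: S_def sym_gens_def inv_inv)
  have Seq: "S = s ` {..<d} \<union> (\<lambda>i. sl2_inv (s i)) ` {..<d}" by (auto simp: S_def sym_gens_def)
  have finS: "finite S" unfolding Seq by simp
  have MS: "N (to_real_mat x) \<le> M" if "x \<in> S" for x unfolding M_def using finS that by (intro Max_ge) auto
  have eta_bound: "N (to_real_mat (G ** H)) \<le> \<eta> * N (to_real_mat G) * N (to_real_mat H)"
    if "G \<in> SL2Z" "H \<in> SL2Z" for G H
  proof -
    have "N (to_real_mat (G ** H)) / (N (to_real_mat G) * N (to_real_mat H)) \<le> \<eta>"
      unfolding \<eta>_def using assms(6) that by (intro cSup_upper) (auto simp: R_def)
    moreover have "N (to_real_mat G) * N (to_real_mat H) > 0" using N1 that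
      by (meson less_le_trans zero_less_one mult_pos_pos)
    ultimately have "N (to_real_mat (G ** H)) \<le> \<eta> * (N (to_real_mat G) * N (to_real_mat H))"
      by (simp add: pos_divide_le_eq)
    then show ?thesis by (simp add: mult.assoc)
  qed
  have eta_pos: "\<eta> > 0"
  proof -
    have I: "mat 1 \<in> SL2Z" by (rule SL2Z_one)
    define a where "a = N (to_real_mat (mat 1))"
    have ea: "N (to_real_mat (mat 1 ** mat 1)) = a" by (simp add: a_def matrix_mul_lid)
    have "N (to_real_mat (mat 1 ** mat 1)) / (N (to_real_mat (mat 1)) * N (to_real_mat (mat 1))) \<in> R"
      unfolding R_def mem_Collect_eq by (rule exI[of _ "mat 1"], rule exI[of _ "mat 1"]) (simp add: I)
    then have mem: "a / (a * a) \<in> R" by (simp only: ea a_def[symmetric])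
    have "bdd_above R" using assms(6) by (simp add: R_def)
    with mem have le: "a / (a*a) \<le> \<eta>" unfolding \<eta>_def by (intro cSup_upper)
    have "a \<ge> 1" unfolding a_def by (rule N1[OF I])
    then have "0 < a / (a*a)" by (intro divide_pos_pos mult_pos_pos) auto
    with le show ?thesis by linarith
  qed
  have g1: "1 \<le> g" and cyc: "cay_cycle p (red_p p ` S) g"
    using assms(7) unfolding is_cay_girth_def S_def by auto
  from cyc obtain t where tall: "(\<forall>i<g. t i \<in> red_p p ` S) \<and>
      (\<forall>i. Suc i < g \<longrightarrow> red_p p (t i ** t (Suc i)) \<noteq> mat 1) \<and>
      red_p p (mat_list_prod (map t [0..<g])) = mat 1"
    unfolding cay_cycle_def by (elim exE) (rule that)
  have tT: "\<forall>i<g. t i \<in> red_p p ` S" using tall by (rule conjunct1)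
  have tnb: "\<forall>i. Suc i < g \<longrightarrow> red_p p (t i ** t (Suc i)) \<noteq> mat 1" using tall by simp
  have tprod: "red_p p (mat_list_prod (map t [0..<g])) = mat 1" using tall by simp
  define u where "u i = (SOME x. x \<in> S \<and> red_p p x = t i)" for i
  have u: "u i \<in> S \<and> red_p p (u i) = t i" if "i < g" for i
  proof -
    from tT that have "t i \<in> red_p p ` S" by simp
    then obtain x where "x \<in> S" "t i = red_p p x" by (rule imageE)
    then have "\<exists>x. x \<in> S \<and> red_p p x = t i" by auto
    then show ?thesis unfolding u_def by (rule someI_ex)
  qed
  have uS: "\<And>i. i<g \<Longrightarrow> u i \<in> S" using u by blast
  have lex: "\<exists>l. fst l < d \<and> letter s l = u i" if "i < g" for i
  proof -
    have "u i \<in> S" using u that by blast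
    then obtain a where a: "a < d" "u i = s a \<or> u i = sl2_inv (s a)" by (auto simp: S_def sym_gens_def)
    from a(2) show "\<exists>l. fst l < d \<and> letter s l = u i"
    proof
      assume "u i = s a" then show ?thesis by (intro exI[of _ "(a,True)"]) (simp add: letter_def a(1))
    next
      assume "u i = sl2_inv (s a)" then show ?thesis by (intro exI[of _ "(a,False)"]) (simp add: letter_def a(1))
    qed
  qed
  define lw where "lw i = (SOME l. fst l < d \<and> letter s l = u i)" for i
  have lw: "fst (lw i) < d \<and> letter s (lw i) = u i" if "i < g" for i
    unfolding lw_def using lex[OF that] by (rule someI_ex)
  define W where "W = mat_list_prod (map u [0..<g])"
  have redW: "red_p p W = mat 1"
  proof -
    have "red_p p W = red_p p (mat_list_prod (map t [0..<g]))"
      unfolding W_def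
    proof (rule prod_red, intro ballI)
      fix i assume "i \<in> set [0..<g]"
      then have "i<g" by simp
      then show "red_p p (u i) = red_p p (t i)" using u[of i] red_red[of p "u i"] by metis
    qed
    also have "\<dots> = mat 1" by (rule tprod)
    finally show ?thesis .
  qed
  have Wne: "W \<noteq> mat 1"
  proof -
    define w where "w = map lw [0..<g]"
    have mm: "map (\<lambda>i. letter s (lw i)) [0..<g] = map u [0..<g]" using lw by auto
    have "word_prod s w = W" unfolding w_def W_def word_prod_map mm by (rule refl)
    moreover have "w \<noteq> []" using g1 by (simp add: w_def)
    moreover have "\<forall>l\<in>set w. fst l < d" using lw by (auto simp: w_def)
    moreover have "reduced_word w"
      unfolding reduced_word_def
    proof (intro allI impI notI)
      fix i assume i: "Suc i < length w" and eq: "fst (w ! i) = fst (w ! Suc i) \<and> snd (w ! i) \<noteq> snd (w ! Suc i)"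
      have ig: "i < g" "Suc i < g" using i by (auto simp: w_def)
      have wi: "w ! i = lw i" "w ! Suc i = lw (Suc i)" using ig by (auto simp: w_def)
      obtain a b1 b2 where l1: "lw i = (a,b1)" and l2: "lw (Suc i) = (a,b2)" and b: "b1 \<noteq> b2"
        using eq wi by (metis prod.collapse)
      have a: "a < d" using lw[OF ig(1)] l1 by simp
      have sa: "s a \<in> SL2Z" using assms(1) a by (simp add: free_basis_def)
      have uu: "u i ** u (Suc i) = mat 1"
      proof -
        have e1: "u i = letter s (a,b1)" using lw[OF ig(1)] l1 by simp
        have e2: "u (Suc i) = letter s (a,b2)" using lw[OF ig(2)] l2 by simp
        have "letter s (a,b1) ** letter s (a,b2) = mat 1"
          using b sa by (cases b1) (auto simp: letter_def inv_left inv_right)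
        then show ?thesis unfolding e1 e2 .
      qed
      have "red_p p (t i ** t (Suc i)) = red_p p (red_p p (u i) ** red_p p (u (Suc i)))" using u ig by simp
      also have "\<dots> = red_p p (u i ** u (Suc i))" by (rule red_mult[symmetric])
      also have "\<dots> = mat 1" using uu red_one p2 by simp
      finally show False using tnb ig by blast
    qed
    ultimately show ?thesis using assms(1) unfolding free_basis_def by blast
  qed
  have h1: "g \<le> 2*k"
  proof -
    have "real g / 2 \<le> of_int \<lceil>real g / 2\<rceil>" by (rule le_of_int_ceiling)
    moreover have "real k = of_int \<lceil>real g / 2\<rceil>" unfolding k_def using g1 by simp
    ultimately have "real g \<le> 2 * real k" by linarith
    then have "real g \<le> real (2*k)" by simp
    then show ?thesis by (simp only: of_nat_le_iff)
  qed
  have h2: "2*k < g + 2"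
  proof -
    have "of_int \<lceil>real g / 2\<rceil> - 1 < real g / 2" using ceiling_correct by blast
    moreover have "real k = of_int \<lceil>real g / 2\<rceil>" unfolding k_def using g1 by simp
    ultimately have "2 * real k < real g + 2" by linarith
    then have "real (2*k) < real (g+2)" by simp
    then show ?thesis by (simp only: of_nat_less_iff)
  qed
  have k1: "1 \<le> k" and kg: "k \<le> g" and gk: "g - k \<le> k" using h1 h2 g1 by arith+
  define A where "A = mat_list_prod (map u [0..<k])"
  define C where "C = mat_list_prod (map u [k..<g])"
  define B where "B = sl2_inv C"
  have WAC: "W = A ** C"
  proof -
    have "[0..<g] = [0..<k] @ [k..<g]" using upt_add_eq_append[of 0 k "g-k"] kg by simp
    then show ?thesis by (simp add: W_def A_def C_def prod_append)
  qed
  have CSL: "C \<in> SL2Z" unfolding C_def using uS S_SL by (intro prod_SL) auto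
  have CB: "C ** B = mat 1" using inv_right[OF CSL] B_def by simp
  have AB: "A \<noteq> B"
  proof
    assume "A = B"
    then have "W = mat 1" using WAC inv_left[OF CSL] B_def by simp
    with Wne show False by simp
  qed
  have redAB: "red_p p A = red_p p B"
  proof -
    have "red_p p A = red_p p (A ** (C ** B))" by (simp add: CB matrix_mul_rid)
    also have "\<dots> = red_p p ((A ** C) ** B)" by (simp add: matrix_mul_assoc)
    also have "\<dots> = red_p p (red_p p W ** red_p p B)" using WAC red_mult by metis
    also have "\<dots> = red_p p B" using redW by (simp add: matrix_mul_lid red_red)
    finally show ?thesis .
  qed
  obtain i j where ij: "A$i$j \<noteq> B$i$j" using AB by (meson vec_eq_iff)
  have "red_p p A $i$j = red_p p B $i$j" using redAB by simp
  then have modeq: "A$i$j mod p = B$i$j mod p" by (simp add: red_p_def)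
  have big: "p \<le> \<bar>A$i$j - B$i$j\<bar>"
  proof -
    have "p dvd A$i$j - B$i$j" using modeq by (simp add: mod_eq_dvd_iff)
    moreover have "A$i$j - B$i$j \<noteq> 0" using ij by simp
    ultimately have "\<bar>p\<bar> \<le> \<bar>A$i$j - B$i$j\<bar>" using dvd_imp_le_int by blast
    then show ?thesis using p2 by simp
  qed
  have bigr: "real_of_int p \<le> \<bar>real_of_int (A$i$j)\<bar> + \<bar>real_of_int (B$i$j)\<bar>"
  proof -
    have "real_of_int p \<le> real_of_int \<bar>A$i$j - B$i$j\<bar>" using big by (simp only: of_int_le_iff)
    moreover have "\<bar>A$i$j - B$i$j\<bar> \<le> \<bar>A$i$j\<bar> + \<bar>B$i$j\<bar>" by (rule abs_triangle_ineq4)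
    ultimately show ?thesis by (metis of_int_abs of_int_add of_int_le_iff order_trans)
  qed
  have p2r: "real_of_int p \<ge> 2" using p2 by simp
  have "0 < d"
  proof (rule ccontr)
    assume "\<not> 0 < d"
    then have "S = {}" by (auto simp: S_def sym_gens_def)
    with uS[of 0] g1 show False by auto
  qed
  have s0S: "s 0 \<in> S" unfolding S_def sym_gens_def using \<open>0<d\<close> by blast
  have etaM: "\<eta> * M \<ge> 1"
    by (rule etaM_ge1[where N=N and \<eta>=\<eta> and M=M, OF assms(1) \<open>0<d\<close> eta_bound eta_pos nn ent MS[OF s0S]])
  have bound_list: "\<eta> * N (to_real_mat (mat_list_prod xs)) \<le> (\<eta>*M)^length xs"
    if "set xs \<subseteq> S" "xs \<noteq> []" for xs
    by (rule prod_bound[where N=N and \<eta>=\<eta> and M=M, OF eta_bound]) (use eta_pos nn that S_SL MS in auto)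
  have final: "\<eta> * real_of_int p / 2 \<le> (\<eta>*M)^k"
  proof (cases "real_of_int p / 2 \<le> \<bar>real_of_int (A$i$j)\<bar> \<or> g - k = 0")
    case True
    then have NA: "real_of_int p / 2 \<le> N (to_real_mat A)"
    proof
      assume "real_of_int p / 2 \<le> \<bar>real_of_int (A$i$j)\<bar>" then show ?thesis using ent[of A i j] by linarith
    next
      assume "g - k = 0"
      then have "C = mat 1" by (simp add: C_def mat_list_prod_def)
      then have "B = mat 1" by (simp add: B_def inv_one)
      then have "\<bar>real_of_int (B$i$j)\<bar> \<le> 1" by (simp add: mat_def)
      then show ?thesis using bigr p2r ent[of A i j] by linarith
    qed
    have "\<eta> * N (to_real_mat A) \<le> (\<eta>*M)^k"
    proof -
      have "set (map u [0..<k]) \<subseteq> S" using uS kg by auto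
      moreover have "map u [0..<k] \<noteq> []" using k1 by simp
      ultimately show ?thesis using bound_list[of "map u [0..<k]"] unfolding A_def by simp
    qed
    moreover have "\<eta> * (real_of_int p / 2) \<le> \<eta> * N (to_real_mat A)"
      using NA eta_pos by (intro mult_left_mono) auto
    ultimately show ?thesis by simp
  next
    case False
    then have NB: "real_of_int p / 2 \<le> N (to_real_mat B)" and gk0: "g - k \<noteq> 0"
      using bigr ent[of B i j] by auto
    have Blist: "B = mat_list_prod (rev (map sl2_inv (map u [k..<g])))" by (simp add: B_def C_def prod_inv)
    have "\<eta> * N (to_real_mat B) \<le> (\<eta>*M)^(g-k)"
    proof -
      have "set (rev (map sl2_inv (map u [k..<g]))) \<subseteq> S" using uS S_inv by auto
      moreover have "rev (map sl2_inv (map u [k..<g])) \<noteq> []" using gk0 by simp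
      ultimately show ?thesis using bound_list[of "rev (map sl2_inv (map u [k..<g]))"] unfolding Blist by simp
    qed
    also have "\<dots> \<le> (\<eta>*M)^k" by (rule power_increasing[OF gk etaM])
    moreover have "\<eta> * (real_of_int p / 2) \<le> \<eta> * N (to_real_mat B)"
      using NB eta_pos by (intro mult_left_mono) auto
    ultimately show ?thesis by simp
  qed
  show ?thesis using final by (simp only: Let_def \<eta>_def R_def M_def S_def k_def)
qed

end
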